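(* Let $\Omega$ be a transitive state space whose positive cone $V_+$ is self-dual with respect to $\langle\cdot,\cdot\rangle_{GL(\Omega)}$. Then for every nonzero effect $e\in\mathcal E_\Omega$, $$\frac{e}{\langle u,e\rangle_{GL(\Omega)}}\in\Omega,$$ and for every ideal observable $F=\{f_a\}_{a\in A}$ on $\Omega$, $$\left\langle f_a,\frac{f_a}{\langle u,f_a\rangle_{GL(\Omega)}}\right\rangle_{GL(\Omega)}=1\quad\text{for all }a\in A.$$
   Context: $V=\mathbb R^{N+1}$ with Euclidean inner product $(\cdot,\cdot)_E$. A state space $\Omega\subset V$ is a compact convex set with $\mathrm{span}(\Omega)=V$ and $0\notin\mathrm{aff}(\Omega)$; $V_+=\{\lambda\omega:\lambda\ge0,\omega\in\Omega\}$; the unit effect $u\in V^*$ satisfies $u(\omega)=1$ on $\Omega$; effects $\mathcal E_\Omega=\{e\in V^*:0\le e(\omega)\le1\ \forall\omega\in\Omega\}$; an observable with finite outcome set $A$ is a family of effects $\{f_a\}_{a\in A}$ with $\sum_af_a=u$ (trivial observable $\{u\}$ excluded). An effect is pure if it is an extreme point of $\mathcal E_\Omega$; indecomposable if $e\ne0$ and $e=e_1+e_2$ with $e_1,e_2\in\mathcal E_\Omega$ forces $e_1,e_2$ to be scalar multiples of $e$. $F=\{f_a\}$ is ideal if each $f_a$ equals $\sum_{i\in I_a}e_i$ or $u-\sum_{i\in I_a}e_i$ for a finite family of pure indecomposable effects. $GL(\Omega)$: group of linear bijections $T$ of $V$ with $T(\Omega)=\Omega$, $\mu$ its normalized Haar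 measure, $\langle x,y\rangle_{GL(\Omega)}=\int(Tx,Ty)_E\,d\mu(T)$. $\Omega$ is transitive if $GL(\Omega)$ acts transitively on the extreme points; then there is a unique $GL(\Omega)$-invariant state $\omega_M$, and by convention $(\omega_M,\omega_M)_E=1$. $V_+$ is self-dual w.r.t. $\langle\cdot,\cdot\rangle_{GL(\Omega)}$ if $V_+=\{y:\langle x,y\rangle_{GL(\Omega)}\ge0\ \forall x\in V_+\}$. Every linear functional (in particular every effect and $u$) is identified with the vector in $V$ representing it through $\langle\cdot,\cdot\rangle_{GL(\Omega)}$, and inner products of effects are computed between these vectors. *)

theory Defs
  imports "HOL-Analysis.Analysis" "HOL-Probability.Probability"
begin

definition state_space :: "(real^'n) set \<Rightarrow> bool" where
  "state_space \<Omega> \<longleftrightarrow> compact \<Omega> \<and> convex \<Omega> \<and> span \<Omega> = UNIV \<and> 0 \<notin> affine hull \<Omega>"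

definition GLset :: "(real^'n) set \<Rightarrow> (real^'n^'n) set" where
  "GLset \<Omega> = {T. invertible T \<and> (\<lambda>x. T *v x) ` \<Omega> = \<Omega>}"

text \<open>Normalized (left) Haar measure on the compact group GL(Omega), viewed as a Borel
  probability measure on the matrix space concentrated on GL(Omega).\<close>
definition haar_GL :: "(real^'n) set \<Rightarrow> (real^'n^'n) measure \<Rightarrow> bool" where
  "haar_GL \<Omega> \<mu> \<longleftrightarrow> prob_space \<mu> \<and> sets \<mu> = sets borel \<and>
     GLset \<Omega> \<in> sets \<mu> \<and> emeasure \<mu> (GLset \<Omega>) = 1 \<and>
     (\<forall>g \<in> GLset \<Omega>. \<forall>B \<in> sets \<mu>. emeasure \<mu> {T. g ** T \<in> B} = emeasure \<mu> B)"

definition ipGL :: "(real^'n^'n) measure \<Rightarrow> real^'n \<Rightarrow> real^'n \<Rightarrow> real" where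
  "ipGL \<mu> x y = (\<integral>T. (T *v x) \<bullet> (T *v y) \<partial>\<mu>)"

definition rep :: "(real^'n^'n) measure \<Rightarrow> (real^'n \<Rightarrow> real) \<Rightarrow> real^'n" where
  "rep \<mu> f = (THE y. \<forall>x. ipGL \<mu> y x = f x)"

definition transitive_ss :: "(real^'n) set \<Rightarrow> bool" where
  "transitive_ss \<Omega> \<longleftrightarrow> (\<forall>x y. x extreme_point_of \<Omega> \<longrightarrow> y extreme_point_of \<Omega> \<longrightarrow>
     (\<exists>T \<in> GLset \<Omega>. T *v x = y))"

definition pos_cone :: "(real^'n) set \<Rightarrow> (real^'n) set" where
  "pos_cone \<Omega> = {c *\<^sub>R w | c w. c \<ge> 0 \<and> w \<in> \<Omega>}"

definition self_dual_GL :: "(real^'n) set \<Rightarrow> (real^'n^'n) measure \<Rightarrow> bool" where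
  "self_dual_GL \<Omega> \<mu> \<longleftrightarrow> pos_cone \<Omega> = {y. \<forall>x \<in> pos_cone \<Omega>. ipGL \<mu> x y \<ge> 0}"

definition unit_effect :: "(real^'n) set \<Rightarrow> (real^'n \<Rightarrow> real) \<Rightarrow> bool" where
  "unit_effect \<Omega> u \<longleftrightarrow> linear u \<and> (\<forall>w \<in> \<Omega>. u w = 1)"

definition effects :: "(real^'n) set \<Rightarrow> (real^'n \<Rightarrow> real) set" where
  "effects \<Omega> = {e. linear e \<and> (\<forall>w \<in> \<Omega>. 0 \<le> e w \<and> e w \<le> 1)}"

text \<open>Pure effect = extreme point of the effect set (written out).\<close>
definition pure_effect :: "(real^'n) set \<Rightarrow> (real^'n \<Rightarrow> real) \<Rightarrow> bool" where
  "pure_effect \<Omega> e \<longleftrightarrow> e \<in> effects \<Omega> \<and>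
     \<not> (\<exists>a \<in> effects \<Omega>. \<exists>b \<in> effects \<Omega>. a \<noteq> b \<and>
          (\<exists>t. 0 < t \<and> t < 1 \<and> e = (\<lambda>x. (1 - t) * a x + t * b x)))"

definition indecomposable :: "(real^'n) set \<Rightarrow> (real^'n \<Rightarrow> real) \<Rightarrow> bool" where
  "indecomposable \<Omega> e \<longleftrightarrow> e \<in> effects \<Omega> \<and> e \<noteq> (\<lambda>x. 0) \<and>
     (\<forall>e1 \<in> effects \<Omega>. \<forall>e2 \<in> effects \<Omega>. e = (\<lambda>x. e1 x + e2 x) \<longrightarrow>
        (\<exists>c. e1 = (\<lambda>x. c * e x)) \<and> (\<exists>c. e2 = (\<lambda>x. c * e x)))"

definition observable :: "(real^'n) set \<Rightarrow> (real^'n \<Rightarrow> real) \<Rightarrow> 'a set \<Rightarrow> ('a \<Rightarrow> real^'n \<Rightarrow> real) \<Rightarrow> bool" where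
  "observable \<Omega> u A f \<longleftrightarrow> finite A \<and> (\<forall>a \<in> A. f a \<in> effects \<Omega>) \<and>
     (\<lambda>x. \<Sum>a\<in>A. f a x) = u \<and> \<not> (\<exists>a. A = {a})"

definition ideal_observable :: "(real^'n) set \<Rightarrow> (real^'n \<Rightarrow> real) \<Rightarrow> 'a set \<Rightarrow> ('a \<Rightarrow> real^'n \<Rightarrow> real) \<Rightarrow> bool" where
  "ideal_observable \<Omega> u A f \<longleftrightarrow> observable \<Omega> u A f \<and>
     (\<forall>a \<in> A. \<exists>es. (\<forall>e \<in> set es. pure_effect \<Omega> e \<and> indecomposable \<Omega> e) \<and>
        (f a = (\<lambda>x. \<Sum>e\<leftarrow>es. e x) \<or> f a = (\<lambda>x. u x - (\<Sum>e\<leftarrow>es. e x))))"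

end

theory Submission imports Defs begin

lemma cont_mvf: "continuous_on A f \<Longrightarrow> continuous_on A (\<lambda>x. (f x :: real^'n^'m) *v v)"
  unfolding matrix_vector_mult_def by (intro continuous_intros)
lemma cont_trf: "continuous_on A f \<Longrightarrow> continuous_on A (\<lambda>x. transpose (f x :: real^'n^'m))"
  unfolding transpose_def by (intro continuous_intros)
lemma cont_mm: "continuous_on A f \<Longrightarrow> continuous_on A g \<Longrightarrow>
   continuous_on A (\<lambda>x. (f x :: real^'n^'m) ** (g x :: real^'k^'n))"
  unfolding matrix_matrix_mult_def by (intro continuous_intros)

lemma linear_expand:
  fixes f :: "real^'n \<Rightarrow> real"
  assumes "linear f"
  shows "f x = (\<Sum>i\<in>UNIV. x$i * f (axis i 1))"
proof -
  have "f x = f (\<Sum>i\<in>UNIV. x$i *\<^sub>R axis i 1)"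
    using basis_expansion[of x] by (simp add: scalar_mult_eq_scaleR)
  also have "\<dots> = (\<Sum>i\<in>UNIV. x$i * f (axis i 1))"
    using assms by (simp add: linear_sum linear_scale)
  finally show ?thesis .
qed

locale hsetting =
  fixes \<Omega> :: "(real^'n) set" and \<mu> :: "(real^'n^'n) measure"
  assumes ss: "state_space \<Omega>" and haar: "haar_GL \<Omega> \<mu>"
begin

abbreviation "G \<equiv> GLset \<Omega>"

lemma prob: "prob_space \<mu>" using haar by (simp add: haar_GL_def)
lemma sets_mu: "sets \<mu> = sets borel" using haar by (simp add: haar_GL_def)
lemma space_mu: "space \<mu> = UNIV" using sets_eq_imp_space_eq[OF sets_mu] by simp
lemma G_sets: "G \<in> sets borel" using haar sets_mu by (simp add: haar_GL_def)
lemma AE_G: "AE T in \<mu>. T \<in> G"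
proof -
  have "emeasure \<mu> G = 1" using haar by (simp add: haar_GL_def)
  then have "measure \<mu> G = 1" by (simp add: measure_def)
  then show ?thesis using prob_space.AE_prob_1[OF prob] by blast
qed

lemma meas: "continuous_on UNIV f \<Longrightarrow> f \<in> borel_measurable \<mu>"
  using measurable_cong_sets[OF sets_mu refl] borel_measurable_continuous_onI by blast

lemma G_mult: "g \<in> G \<Longrightarrow> S \<in> G \<Longrightarrow> g ** S \<in> G"
proof -
  assume g: "g \<in> G" and S: "S \<in> G"
  have "(\<lambda>x. (g ** S) *v x) ` \<Omega> = (\<lambda>x. g *v x) ` ((\<lambda>x. S *v x) ` \<Omega>)"
    by (auto simp: image_image matrix_vector_mul_assoc)
  then show ?thesis using g S by (auto simp: GLset_def invertible_mult)
qed

lemma G_inv: "S \<in> G \<Longrightarrow> B ** S = mat 1 \<Longrightarrow> B \<in> G"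
proof -
  assume S: "S \<in> G" and B: "B ** S = mat 1"
  have "S ** B = mat 1" using B matrix_left_right_inverse by blast
  then have inv: "invertible B" using B invertible_def by blast
  have "(\<lambda>x. B *v x) ` \<Omega> = (\<lambda>x. B *v x) ` ((\<lambda>x. S *v x) ` \<Omega>)"
    using S by (simp add: GLset_def)
  also have "\<dots> = (\<lambda>x. (B ** S) *v x) ` \<Omega>"
    by (auto simp: image_image matrix_vector_mul_assoc)
  also have "\<dots> = \<Omega>" using B by simp
  finally show ?thesis using inv by (simp add: GLset_def)
qed

lemma bound_vec: "\<exists>C. \<forall>T\<in>G. norm (T *v z) \<le> C"
proof -
  have "compact \<Omega>" using ss by (simp add: state_space_def)
  then obtain R where R: "\<forall>x\<in>\<Omega>. norm x \<le> R"
    using compact_imp_bounded bounded_iff by blast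
  have "z \<in> span \<Omega>" using ss by (simp add: state_space_def)
  then obtain S u where S: "finite S" "S \<subseteq> \<Omega>" and z: "(\<Sum>v\<in>S. u v *\<^sub>R v) = z"
    unfolding span_explicit by blast
  have "norm (T *v z) \<le> (\<Sum>v\<in>S. \<bar>u v\<bar> * R)" if T: "T \<in> G" for T
  proof -
    have "T *v z = (\<Sum>v\<in>S. u v *\<^sub>R (T *v v))"
      unfolding z[symmetric] by (simp add: linear_sum linear_scale)
    then have "norm (T *v z) \<le> (\<Sum>v\<in>S. norm (u v *\<^sub>R (T *v v)))"
      by (metis norm_sum)
    also have "\<dots> \<le> (\<Sum>v\<in>S. \<bar>u v\<bar> * R)"
    proof (rule sum_mono)
      fix v assume "v \<in> S"
      then have "T *v v \<in> \<Omega>" using T S(2) by (auto simp: GLset_def)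
      then show "norm (u v *\<^sub>R (T *v v)) \<le> \<bar>u v\<bar> * R"
        using R by (simp add: mult_left_mono)
    qed
    finally show ?thesis .
  qed
  then show ?thesis by blast
qed

lemma LI:
  fixes h :: "real^'n^'n \<Rightarrow> real"
  assumes g: "g \<in> G" and h: "h \<in> borel_measurable borel"
  shows "(\<integral>S. h (g ** S) \<partial>\<mu>) = integral\<^sup>L \<mu> h"
proof -
  have mg: "(\<lambda>S. g ** S) \<in> \<mu> \<rightarrow>\<^sub>M borel"
    by (rule meas, intro cont_mm continuous_intros)
  have "distr \<mu> borel (\<lambda>S. g ** S) = \<mu>"
  proof (rule measure_eqI)
    show "sets (distr \<mu> borel ((**) g)) = sets \<mu>" using sets_mu by simp
    fix A assume "A \<in> sets (distr \<mu> borel ((**) g))"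
    then have A: "A \<in> sets borel" by simp
    have "emeasure (distr \<mu> borel ((**) g)) A = emeasure \<mu> ((\<lambda>S. g ** S) -` A \<inter> space \<mu>)"
      using emeasure_distr[OF mg A] by simp
    also have "\<dots> = emeasure \<mu> {T. g ** T \<in> A}" by (simp add: space_mu vimage_def)
    also have "\<dots> = emeasure \<mu> A" using haar g A sets_mu by (simp add: haar_GL_def)
    finally show "emeasure (distr \<mu> borel ((**) g)) A = emeasure \<mu> A" .
  qed
  then have "integral\<^sup>L \<mu> h = integral\<^sup>L (distr \<mu> borel (\<lambda>S. g ** S)) h" by simp
  also have "\<dots> = (\<integral>S. h (g ** S) \<partial>\<mu>)" by (rule integral_distr[OF mg h])
  finally show ?thesis by simp
qed

definition bf :: "(real^'n^'n \<Rightarrow> real^'n^'n) \<Rightarrow> real^'n \<Rightarrow> real^'n \<Rightarrow> real" where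
  "bf \<phi> x y = (\<integral>S. (\<phi> S *v x) \<bullet> (\<phi> S *v y) \<partial>\<mu>)"

definition okphi :: "(real^'n^'n \<Rightarrow> real^'n^'n) \<Rightarrow> bool" where
  "okphi \<phi> \<longleftrightarrow> continuous_on UNIV \<phi> \<and> (\<forall>z. \<exists>C. \<forall>T\<in>G. norm (\<phi> T *v z) \<le> C)
     \<and> (\<forall>T\<in>G. invertible (\<phi> T))"

lemma fin: "finite_measure \<mu>" using prob by (simp add: prob_space_def)

lemma bf_int:
  assumes "okphi \<phi>"
  shows "integrable \<mu> (\<lambda>S. (\<phi> S *v x) \<bullet> (\<phi> S *v y))"
proof -
  obtain Cx where Cx: "\<forall>T\<in>G. norm (\<phi> T *v x) \<le> Cx" using assms okphi_def by metis
  obtain Cy where Cy: "\<forall>T\<in>G. norm (\<phi> T *v y) \<le> Cy" using assms okphi_def by metis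
  have "AE S in \<mu>. norm ((\<phi> S *v x) \<bullet> (\<phi> S *v y)) \<le> Cx * Cy"
    using AE_G
  proof eventually_elim
    case (elim S)
    have "norm ((\<phi> S *v x) \<bullet> (\<phi> S *v y)) \<le> norm (\<phi> S *v x) * norm (\<phi> S *v y)"
      by (simp add: Cauchy_Schwarz_ineq2)
    also have "\<dots> \<le> Cx * Cy" using Cx Cy elim by (simp add: mult_mono')
    finally show ?case .
  qed
  moreover have "(\<lambda>S. (\<phi> S *v x) \<bullet> (\<phi> S *v y)) \<in> borel_measurable \<mu>"
    using assms unfolding okphi_def
    by (intro meas continuous_intros cont_mvf) auto
  ultimately show ?thesis by (rule finite_measure.integrable_const_bound[OF fin])
qed

lemma bf_sym: "bf \<phi> x y = bf \<phi> y x"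
  unfolding bf_def by (simp add: inner_commute)

lemma bf_add: assumes ok: "okphi \<phi>" shows "bf \<phi> (x + x') y = bf \<phi> x y + bf \<phi> x' y"
  unfolding bf_def
  by (simp add: matrix_vector_right_distrib inner_add_left Bochner_Integration.integral_add[OF bf_int[OF ok] bf_int[OF ok]])

lemma bf_scale: "bf \<phi> (c *\<^sub>R x) y = c * bf \<phi> x y"
  unfolding bf_def by (simp add: matrix_vector_mult_scaleR)

lemma bf_lin1: "okphi \<phi> \<Longrightarrow> linear (\<lambda>x. bf \<phi> x y)"
  by (rule linearI) (simp_all add: bf_add bf_scale)

lemma bf_lin2: "okphi \<phi> \<Longrightarrow> linear (\<lambda>y. bf \<phi> x y)"
  using bf_lin1[of \<phi> x] by (simp add: bf_sym[of \<phi> x])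

lemma bf_nonneg: "bf \<phi> x x \<ge> 0"
  unfolding bf_def by (intro integral_nonneg_AE) simp

lemma bf_zero:
  assumes ok: "okphi \<phi>" and z: "bf \<phi> x x = 0"
  shows "x = 0"
proof -
  have "AE S in \<mu>. (\<phi> S *v x) \<bullet> (\<phi> S *v x) = 0"
    using z integral_nonneg_eq_0_iff_AE[OF bf_int[OF ok]] unfolding bf_def by simp
  with AE_G have a: "AE S in \<mu>. S \<in> G \<and> (\<phi> S *v x) \<bullet> (\<phi> S *v x) = 0" by eventually_elim simp
  have "\<exists>S. S \<in> G \<and> (\<phi> S *v x) \<bullet> (\<phi> S *v x) = 0"
  proof (rule ccontr)
    assume n: "\<not> (\<exists>S. S \<in> G \<and> (\<phi> S *v x) \<bullet> (\<phi> S *v x) = 0)"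
    from a have "AE S in \<mu>. False" by eventually_elim (use n in blast)
    then show False using prob_space.AE_False[OF prob] by simp
  qed
  then obtain S where S: "S \<in> G" "(\<phi> S *v x) \<bullet> (\<phi> S *v x) = 0" by blast
  then have "\<phi> S *v x = 0" by simp
  moreover have "invertible (\<phi> S)" using ok S unfolding okphi_def by blast
  ultimately show ?thesis using inj_matrix_vector_mult
    by (metis matrix_vector_mult_0_right injD)
qed


lemma ok_id: "okphi (\<lambda>S. S)"
  unfolding okphi_def using bound_vec by (auto simp: GLset_def continuous_on_id)

lemma ok_tr: "okphi transpose"
proof -
  have "\<forall>i. \<exists>C. \<forall>T\<in>G. norm (T *v axis i 1) \<le> C" using bound_vec by blast
  then obtain C where C: "\<forall>i. \<forall>T\<in>G. norm (T *v axis i 1) \<le> C i"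
    by (metis choice)
  have "norm (transpose T *v z) \<le> (\<Sum>i\<in>UNIV. norm z * C i)" if T: "T \<in> G" for T z
  proof -
    have "norm (transpose T *v z) \<le> (\<Sum>i\<in>UNIV. \<bar>(transpose T *v z) $ i\<bar>)"
      by (rule norm_le_l1_cart)
    also have "\<dots> \<le> (\<Sum>i\<in>UNIV. norm z * C i)"
    proof (rule sum_mono)
      fix i
      have "(transpose T *v z) $ i = z \<bullet> (T *v axis i 1)"
        using dot_lmul_matrix[of z T "axis i 1"] by (simp add: inner_axis)
      then have "\<bar>(transpose T *v z) $ i\<bar> \<le> norm z * norm (T *v axis i 1)"
        by (simp add: Cauchy_Schwarz_ineq2)
      also have "\<dots> \<le> norm z * C i" using C T by (simp add: mult_left_mono)
      finally show "\<bar>(transpose T *v z) $ i\<bar> \<le> norm z * C i" .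
    qed
    finally show ?thesis .
  qed
  then have "\<forall>z. \<exists>C. \<forall>T\<in>G. norm (transpose T *v z) \<le> C" by blast
  moreover have "continuous_on UNIV (transpose :: real^'n^'n \<Rightarrow> _)"
    using cont_trf[OF continuous_on_id] by simp
  ultimately show ?thesis unfolding okphi_def
    by (auto simp: GLset_def transpose_invertible)
qed

abbreviation "ip \<equiv> bf (\<lambda>S. S)"

lemma ip_eq: "ipGL \<mu> x y = ip x y" by (simp add: ipGL_def bf_def)

lemma ip_diff1: "ip (x - x') y = ip x y - ip x' y"
  using linear_diff[OF bf_lin1[OF ok_id]] by blast
lemma ip_add1: "ip (x + x') y = ip x y + ip x' y"
  using bf_add[OF ok_id] by blast
lemma ip_add2: "ip y (x + x') = ip y x + ip y x'"
  using bf_add[OF ok_id] bf_sym by metis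
lemma ip_diff2: "ip y (x - x') = ip y x - ip y x'"
  using ip_diff1 bf_sym by metis
lemma ip_scale2: "ip y (c *\<^sub>R x) = c * ip y x"
  using bf_scale bf_sym by metis

lemma ip_inj: "(\<And>x. ip p x = ip q x) \<Longrightarrow> p = q"
proof -
  assume h: "\<And>x. ip p x = ip q x"
  have "ip (p - q) (p - q) = 0" using h[of "p - q"] by (simp add: ip_diff1)
  then have "p - q = 0" using bf_zero[OF ok_id] by blast
  then show ?thesis by simp
qed

lemma ip_expand: "ip y x = (\<Sum>i\<in>UNIV. x$i * ip y (axis i 1))"
  using linear_expand[OF bf_lin2[OF ok_id]] by blast

lemma riesz_ex:
  fixes f :: "real^'n \<Rightarrow> real"
  assumes f: "linear f"
  shows "\<exists>y. \<forall>x. ip y x = f x"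
proof -
  define \<Phi> where "\<Phi> y = (\<chi> i. ip y (axis i 1))" for y
  have lin: "linear \<Phi>"
    by (rule linearI) (simp_all add: \<Phi>_def vec_eq_iff ip_add1 bf_scale)
  have ipP: "ip y x = \<Phi> y \<bullet> x" for y x
    by (simp add: ip_expand[of y x] \<Phi>_def inner_vec_def mult.commute)
  have "inj \<Phi>"
  proof (rule injI)
    fix a b assume "\<Phi> a = \<Phi> b"
    then show "a = b" by (intro ip_inj) (simp add: ipP)
  qed
  then have "surj \<Phi>" using linear_injective_imp_surjective[OF lin] by simp
  then obtain y where y: "\<Phi> y = (\<chi> i. f (axis i 1))" by (metis surjD)
  have "ip y x = f x" for x
    using linear_expand[OF f, of x] by (simp add: ipP y inner_vec_def mult.commute)
  then show ?thesis by blast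
qed

lemma rep_eq: "linear f \<Longrightarrow> ipGL \<mu> (rep \<mu> f) x = f x"
proof -
  assume f: "linear f"
  have "\<exists>!y. \<forall>x. ipGL \<mu> y x = f x"
    using riesz_ex[OF f] ip_inj by (metis ip_eq)
  then have "\<forall>x. ipGL \<mu> (rep \<mu> f) x = f x" unfolding rep_def by (rule theI')
  then show ?thesis by blast
qed

lemma rep_unique: "linear f \<Longrightarrow> (\<And>x. ip y x = f x) \<Longrightarrow> rep \<mu> f = y"
  using rep_eq ip_inj by (metis ip_eq)


lemma borel_cont: "continuous_on UNIV f \<Longrightarrow> f \<in> borel_measurable borel"
  by (rule borel_measurable_continuous_onI)

lemma k_inv:
  assumes g: "g \<in> G"
  shows "bf transpose (transpose g *v x) (transpose g *v y) = bf transpose x y"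
proof -
  define h where "h P = (transpose P *v x) \<bullet> (transpose P *v y)" for P :: "real^'n^'n"
  have hb: "h \<in> borel_measurable borel" unfolding h_def
    by (intro borel_cont continuous_intros cont_mvf cont_trf continuous_on_id)
  have eq: "(transpose S *v (transpose g *v x)) \<bullet> (transpose S *v (transpose g *v y)) = h (g ** S)" for S
    unfolding h_def by (simp only: matrix_transpose_mul matrix_vector_mul_assoc)
  have "bf transpose (transpose g *v x) (transpose g *v y) = (\<integral>S. h (g ** S) \<partial>\<mu>)"
    unfolding bf_def by (simp only: eq)
  also have "\<dots> = integral\<^sup>L \<mu> h" by (rule LI[OF g hb])
  also have "\<dots> = bf transpose x y" unfolding bf_def h_def by simp
  finally show ?thesis .
qed

definition K :: "real^'n^'n" where "K = (\<chi> i j. bf transpose (axis i 1) (axis j 1))"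
definition Ki :: "real^'n^'n" where "Ki = matrix_inv K"
definition L :: "real^'n^'n \<Rightarrow> real^'n^'n" where "L S = K ** transpose S ** Ki"

lemma k_K: "bf transpose x y = x \<bullet> (K *v y)"
proof -
  have "bf transpose x y = (\<Sum>i\<in>UNIV. x$i * bf transpose (axis i 1) y)"
    using linear_expand[OF bf_lin1[OF ok_tr]] by blast
  also have "\<dots> = (\<Sum>i\<in>UNIV. x$i * (\<Sum>j\<in>UNIV. y$j * bf transpose (axis i 1) (axis j 1)))"
    using linear_expand[OF bf_lin2[OF ok_tr]] by metis
  also have "\<dots> = x \<bullet> (K *v y)"
    by (simp add: K_def inner_vec_def matrix_vector_mult_def mult.commute)
  finally show ?thesis .
qed

lemma K_sym: "transpose K = K"
  unfolding K_def transpose_def by (simp add: vec_eq_iff bf_sym)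

lemma vec_eq_inner: "(\<And>x. x \<bullet> (a::real^'n) = x \<bullet> b) \<Longrightarrow> a = b"
  by (metis inner_diff_right inner_eq_zero_iff right_minus_eq)

lemma K_invertible: "invertible K"
proof -
  have "\<forall>y. K *v y = 0 \<longrightarrow> y = 0"
  proof (intro allI impI)
    fix y assume "K *v y = 0"
    then have "bf transpose y y = 0" by (simp add: k_K)
    then show "y = 0" using bf_zero[OF ok_tr] by blast
  qed
  then show ?thesis using matrix_left_invertible_ker invertible_left_inverse by blast
qed

lemma KKi: "K ** Ki = mat 1" and KiK: "Ki ** K = mat 1"
proof -
  have "\<exists>A'. K ** A' = mat 1 \<and> A' ** K = mat 1" using K_invertible invertible_def by blast
  then have "K ** matrix_inv K = mat 1 \<and> matrix_inv K ** K = mat 1"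
    unfolding matrix_inv_def by (rule someI_ex)
  then show "K ** Ki = mat 1" "Ki ** K = mat 1" by (auto simp: Ki_def)
qed

lemma Ki_sym: "transpose Ki = Ki"
proof -
  have "transpose Ki ** K = mat 1"
    using KKi K_sym by (metis matrix_transpose_mul transpose_mat)
  then have "transpose Ki = transpose Ki ** (K ** Ki)" by (simp add: KKi)
  also have "\<dots> = (transpose Ki ** K) ** Ki" by (simp add: matrix_mul_assoc)
  also have "\<dots> = Ki" using \<open>transpose Ki ** K = mat 1\<close> by simp
  finally show ?thesis .
qed

lemma gKg: assumes g: "g \<in> G" shows "g ** K ** transpose g = K"
proof -
  have "(g ** K ** transpose g) *v y = K *v y" for y
  proof (rule vec_eq_inner)
    fix x
    have "x \<bullet> ((g ** K ** transpose g) *v y) = (transpose g *v x) \<bullet> (K *v (transpose g *v y))"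
      using dot_lmul_matrix[of x g] by (simp add: matrix_vector_mul_assoc[symmetric])
    also have "\<dots> = bf transpose (transpose g *v x) (transpose g *v y)" by (simp add: k_K)
    also have "\<dots> = x \<bullet> (K *v y)" using k_inv[OF g, of x y] by (simp only: k_K)
    finally show "x \<bullet> ((g ** K ** transpose g) *v y) = x \<bullet> (K *v y)" .
  qed
  then show ?thesis using matrix_eq by blast
qed

lemma L_right: assumes S: "S \<in> G" shows "S ** L S = mat 1"
proof -
  have "S ** L S = (S ** K ** transpose S) ** Ki" by (simp add: L_def matrix_mul_assoc)
  also have "\<dots> = mat 1" using gKg[OF S] KKi by simp
  finally show ?thesis .
qed

lemma L_left: "S \<in> G \<Longrightarrow> L S ** S = mat 1"
  using L_right matrix_left_right_inverse by blast

lemma L_G: "S \<in> G \<Longrightarrow> L S \<in> G"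
  using L_left G_inv by blast

lemma L_L: "L (L S) = S"
proof -
  have "L (L S) = (K ** Ki) ** S ** (K ** Ki)"
    by (simp add: L_def matrix_transpose_mul K_sym Ki_sym matrix_mul_assoc)
  then show ?thesis by (simp add: KKi)
qed

lemma L_mult: "L (A ** B) = L B ** L A"
proof -
  have "L B ** L A = K ** transpose B ** (Ki ** K) ** transpose A ** Ki"
    by (simp add: L_def matrix_mul_assoc)
  then show ?thesis by (simp add: KiK L_def matrix_transpose_mul matrix_mul_assoc)
qed

lemma L_cont: "continuous_on UNIV L"
  unfolding L_def[abs_def] by (intro cont_mm cont_trf continuous_on_id continuous_on_const)


lemma psf: "pair_sigma_finite \<mu> \<mu>"
  by (simp add: pair_sigma_finite_def prob_space_imp_sigma_finite prob)

lemma sfm: "sigma_finite_measure \<mu>"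
  by (simp add: prob_space_imp_sigma_finite prob)

lemma pair_meas:
  fixes h :: "real^'n^'n \<Rightarrow> real"
  assumes hb: "h \<in> borel_measurable borel"
    and c: "continuous_on UNIV (c :: (real^'n^'n) \<times> (real^'n^'n) \<Rightarrow> real^'n^'n)"
  shows "(\<lambda>z. h (c z)) \<in> borel_measurable (\<mu> \<Otimes>\<^sub>M \<mu>)"
proof -
  have "sets (\<mu> \<Otimes>\<^sub>M \<mu>) = sets (borel \<Otimes>\<^sub>M borel)"
    by (rule sets_pair_measure_cong[OF sets_mu sets_mu])
  also have "\<dots> = sets (borel :: ((real^'n^'n) \<times> (real^'n^'n)) measure)" by (simp only: borel_prod)
  finally have se: "sets (\<mu> \<Otimes>\<^sub>M \<mu>) = sets (borel :: ((real^'n^'n) \<times> (real^'n^'n)) measure)" .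
  have "(\<lambda>z. h (c z)) \<in> borel_measurable borel"
    using measurable_compose[OF borel_cont[OF c] hb] by simp
  then show ?thesis using measurable_cong_sets[OF se refl] by blast
qed

lemma int_const_AE:
  fixes f :: "real^'n^'n \<Rightarrow> real"
  assumes "f \<in> borel_measurable \<mu>" "AE x in \<mu>. f x = c"
  shows "integral\<^sup>L \<mu> f = c"
proof -
  have "integral\<^sup>L \<mu> f = (\<integral>x. c \<partial>\<mu>)" by (rule integral_cong_AE) (use assms in auto)
  also have "\<dots> = c" using prob_space.prob_space[OF prob] by simp
  finally show ?thesis .
qed

lemma Inv:
  fixes h :: "real^'n^'n \<Rightarrow> real"
  assumes hb: "h \<in> borel_measurable borel" and bd: "\<And>P. \<bar>h P\<bar> \<le> B"
  shows "(\<integral>S. h (L S) \<partial>\<mu>) = integral\<^sup>L \<mu> h"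
proof -
  interpret P: pair_sigma_finite \<mu> \<mu> by (rule psf)
  have cLf: "continuous_on UNIV (\<lambda>z::(real^'n^'n) \<times> (real^'n^'n). L (fst z))"
    by (rule continuous_on_compose2[OF L_cont continuous_on_fst[OF continuous_on_id]]) auto
  have cLs: "continuous_on UNIV (\<lambda>z::(real^'n^'n) \<times> (real^'n^'n). L (snd z))"
    by (rule continuous_on_compose2[OF L_cont continuous_on_snd[OF continuous_on_id]]) auto
  have m1: "(\<lambda>(S, R). h (L S ** R)) \<in> borel_measurable (\<mu> \<Otimes>\<^sub>M \<mu>)"
    using pair_meas[OF hb cont_mm[OF cLf continuous_on_snd[OF continuous_on_id]]] by (simp add: case_prod_beta)
  have m2: "(\<lambda>(R, S). h (L S ** R)) \<in> borel_measurable (\<mu> \<Otimes>\<^sub>M \<mu>)"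
    using pair_meas[OF hb cont_mm[OF cLs continuous_on_fst[OF continuous_on_id]]] by (simp add: case_prod_beta)
  have int: "integrable (\<mu> \<Otimes>\<^sub>M \<mu>) (\<lambda>(S, R). h (L S ** R))"
  proof (rule finite_measure.integrable_const_bound)
    show "finite_measure (\<mu> \<Otimes>\<^sub>M \<mu>)"
      using prob_space_pair[OF prob prob] by (simp add: prob_space_def)
    show "AE x in \<mu> \<Otimes>\<^sub>M \<mu>. norm (case x of (S, R) \<Rightarrow> h (L S ** R)) \<le> B"
      using bd by (auto simp: case_prod_beta)
  qed (rule m1)
  have fub: "(\<integral>R. (\<integral>S. h (L S ** R) \<partial>\<mu>) \<partial>\<mu>) = (\<integral>S. (\<integral>R. h (L S ** R) \<partial>\<mu>) \<partial>\<mu>)"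
    using P.Fubini_integral[OF int] by simp
  have rhs: "(\<integral>S. (\<integral>R. h (L S ** R) \<partial>\<mu>) \<partial>\<mu>) = integral\<^sup>L \<mu> h"
  proof (rule int_const_AE)
    show "(\<lambda>S. \<integral>R. h (L S ** R) \<partial>\<mu>) \<in> borel_measurable \<mu>"
      using sigma_finite_measure.borel_measurable_lebesgue_integral[OF sfm, of "\<lambda>S R. h (L S ** R)" \<mu>] m1 by simp
    show "AE S in \<mu>. (\<integral>R. h (L S ** R) \<partial>\<mu>) = integral\<^sup>L \<mu> h"
      using AE_G by eventually_elim (rule LI[OF L_G hb])
  qed
  have lhs: "(\<integral>R. (\<integral>S. h (L S ** R) \<partial>\<mu>) \<partial>\<mu>) = (\<integral>S. h (L S) \<partial>\<mu>)"
  proof (rule int_const_AE)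
    show "(\<lambda>R. \<integral>S. h (L S ** R) \<partial>\<mu>) \<in> borel_measurable \<mu>"
      using sigma_finite_measure.borel_measurable_lebesgue_integral[OF sfm, of "\<lambda>R S. h (L S ** R)" \<mu>] m2 by simp
    show "AE R in \<mu>. (\<integral>S. h (L S ** R) \<partial>\<mu>) = (\<integral>S. h (L S) \<partial>\<mu>)"
      using AE_G
    proof eventually_elim
      case (elim R)
      define h1 where "h1 P = h (L P ** R)" for P
      have h1b: "h1 \<in> borel_measurable borel" unfolding h1_def
        using measurable_compose[OF borel_cont[OF cont_mm[OF L_cont continuous_on_const]] hb] by simp
      have "(\<integral>S. h (L S ** R) \<partial>\<mu>) = integral\<^sup>L \<mu> h1" by (simp add: h1_def[abs_def])
      also have "\<dots> = (\<integral>S. h1 (R ** S) \<partial>\<mu>)" by (rule LI[OF elim h1b, symmetric])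
      also have "\<dots> = (\<integral>S. h (L S) \<partial>\<mu>)"
        by (simp add: h1_def L_mult matrix_mul_assoc[symmetric] L_left[OF elim])
      finally show ?case .
    qed
  qed
  show ?thesis using fub lhs rhs by simp
qed


lemma RI:
  fixes h :: "real^'n^'n \<Rightarrow> real"
  assumes hb: "h \<in> borel_measurable borel" and bd: "\<And>P. \<bar>h P\<bar> \<le> B" and T: "T \<in> G"
  shows "(\<integral>S. h (S ** T) \<partial>\<mu>) = integral\<^sup>L \<mu> h"
proof -
  define h1 where "h1 P = h (L P ** T)" for P
  have h1b: "h1 \<in> borel_measurable borel" unfolding h1_def
    using measurable_compose[OF borel_cont[OF cont_mm[OF L_cont continuous_on_const]] hb] by simp
  define h2 where "h2 P = h (L P)" for P
  have h2b: "h2 \<in> borel_measurable borel" unfolding h2_def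
    using measurable_compose[OF borel_cont[OF L_cont] hb] by simp
  have "(\<integral>S. h (S ** T) \<partial>\<mu>) = (\<integral>S. h1 (L S) \<partial>\<mu>)" by (simp add: h1_def L_L)
  also have "\<dots> = integral\<^sup>L \<mu> h1" by (rule Inv[OF h1b, of B]) (simp add: h1_def bd)
  also have "\<dots> = (\<integral>S. h2 (L T ** S) \<partial>\<mu>)"
    by (simp add: h1_def[abs_def] h2_def L_mult L_L)
  also have "\<dots> = integral\<^sup>L \<mu> h2" by (rule LI[OF L_G[OF T] h2b])
  also have "\<dots> = integral\<^sup>L \<mu> h" unfolding h2_def[abs_def] by (rule Inv[OF hb bd])
  finally show ?thesis .
qed

lemma ip_invariant:
  assumes T: "T \<in> G"
  shows "ip (T *v x) (T *v y) = ip x y"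
proof -
  obtain Cx where Cx: "\<forall>P\<in>G. norm (P *v x) \<le> Cx" using bound_vec by blast
  obtain Cy where Cy: "\<forall>P\<in>G. norm (P *v y) \<le> Cy" using bound_vec by blast
  define B where "B = Cx * Cy"
  define h0 where "h0 P = (P *v x) \<bullet> (P *v y)" for P :: "real^'n^'n"
  define hb where "hb P = max (- B) (min B (h0 P))" for P
  have h0c: "continuous_on UNIV h0" unfolding h0_def
    by (intro continuous_intros cont_mvf continuous_on_id)
  have hbc: "continuous_on UNIV hb" unfolding hb_def
    by (intro continuous_intros h0c)
  have eqG: "h0 P = hb P" if P: "P \<in> G" for P
  proof -
    have "\<bar>h0 P\<bar> \<le> norm (P *v x) * norm (P *v y)"
      unfolding h0_def by (rule Cauchy_Schwarz_ineq2)
    also have "\<dots> \<le> B" unfolding B_def using Cx Cy P by (simp add: mult_mono')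
    finally show ?thesis unfolding hb_def by auto
  qed
  have bd: "\<bar>hb P\<bar> \<le> \<bar>B\<bar>" for P unfolding hb_def by auto
  have "ip (T *v x) (T *v y) = (\<integral>S. h0 (S ** T) \<partial>\<mu>)"
    unfolding bf_def h0_def by (simp add: matrix_vector_mul_assoc)
  also have "\<dots> = (\<integral>S. hb (S ** T) \<partial>\<mu>)"
  proof (rule integral_cong_AE)
    show "(\<lambda>S. h0 (S ** T)) \<in> borel_measurable \<mu>"
      by (rule meas, rule continuous_on_compose2[OF h0c cont_mm[OF continuous_on_id continuous_on_const]]) auto
    show "(\<lambda>S. hb (S ** T)) \<in> borel_measurable \<mu>"
      by (rule meas, rule continuous_on_compose2[OF hbc cont_mm[OF continuous_on_id continuous_on_const]]) auto
    show "AE S in \<mu>. h0 (S ** T) = hb (S ** T)"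
      using AE_G by eventually_elim (rule eqG[OF G_mult[OF _ T]])
  qed
  also have "\<dots> = integral\<^sup>L \<mu> hb" by (rule RI[OF borel_cont[OF hbc] bd T])
  also have "\<dots> = integral\<^sup>L \<mu> h0"
  proof (rule integral_cong_AE)
    show "hb \<in> borel_measurable \<mu>" by (rule meas[OF hbc])
    show "h0 \<in> borel_measurable \<mu>" by (rule meas[OF h0c])
    show "AE S in \<mu>. hb S = h0 S" using AE_G by eventually_elim (simp add: eqG)
  qed
  also have "\<dots> = ip x y" unfolding bf_def h0_def[abs_def] by simp
  finally show ?thesis .
qed


end

locale msetting = hsetting +
  fixes u
  assumes trans: "transitive_ss \<Omega>" and sd: "self_dual_GL \<Omega> \<mu>" and ue: "unit_effect \<Omega> u"
begin

lemma compact_O: "compact \<Omega>" and convex_O: "convex \<Omega>" and zero_notin: "0 \<notin> \<Omega>"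
  using ss hull_subset[of \<Omega> affine] unfolding state_space_def by auto

lemma u_lin: "linear u" and u1: "w \<in> \<Omega> \<Longrightarrow> u w = 1"
  using ue unfolding unit_effect_def by auto

lemma u_scale: "w \<in> \<Omega> \<Longrightarrow> u (c *\<^sub>R w) = c"
  using u1 linear_scale[OF u_lin] by simp

lemma eff_lin: "e \<in> effects \<Omega> \<Longrightarrow> linear e" and eff_bd: "e \<in> effects \<Omega> \<Longrightarrow> w \<in> \<Omega> \<Longrightarrow> 0 \<le> e w \<and> e w \<le> 1"
  unfolding effects_def by auto

lemma rep_ip: "linear f \<Longrightarrow> ip (rep \<mu> f) x = f x"
  using rep_eq ip_eq by metis

lemma ip_scale1: "ip (c *\<^sub>R x) y = c * ip x y" by (rule bf_scale)

lemma ip_zero1: "ip 0 y = 0" using ip_scale1[of 0 0 y] by simp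

lemma O_pos: "w \<in> \<Omega> \<Longrightarrow> w \<in> pos_cone \<Omega>"
  unfolding pos_cone_def by (rule CollectI, rule exI[of _ 1], rule exI[of _ w]) simp

lemma ip_O_nonneg: "a \<in> \<Omega> \<Longrightarrow> x \<in> \<Omega> \<Longrightarrow> ip a x \<ge> 0"
proof -
  assume a: "a \<in> \<Omega>" and x: "x \<in> \<Omega>"
  have "a \<in> {y. \<forall>x \<in> pos_cone \<Omega>. ipGL \<mu> x y \<ge> 0}" using sd O_pos[OF a] by (simp add: self_dual_GL_def)
  then have "ip x a \<ge> 0" using O_pos[OF x] by (simp add: ip_eq)
  then show ?thesis by (simp add: bf_sym)
qed

lemma rep_pos: assumes e: "e \<in> effects \<Omega>" shows "rep \<mu> e \<in> pos_cone \<Omega>"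
proof -
  have "ipGL \<mu> x (rep \<mu> e) \<ge> 0" if x: "x \<in> pos_cone \<Omega>" for x
  proof -
    obtain c w where cw: "x = c *\<^sub>R w" "c \<ge> 0" "w \<in> \<Omega>" using x unfolding pos_cone_def by blast
    have "ipGL \<mu> x (rep \<mu> e) = ip (rep \<mu> e) x" by (simp add: ip_eq bf_sym)
    also have "\<dots> = e x" by (rule rep_ip[OF eff_lin[OF e]])
    also have "\<dots> = c * e w" using cw linear_scale[OF eff_lin[OF e]] by simp
    finally show ?thesis using cw eff_bd[OF e] by simp
  qed
  then show ?thesis using sd unfolding self_dual_GL_def by blast
qed

lemma rep_nonzero:
  assumes e: "e \<in> effects \<Omega>" and nz: "e \<noteq> (\<lambda>x. 0)"
  shows "\<exists>c w. c > 0 \<and> w \<in> \<Omega> \<and> rep \<mu> e = c *\<^sub>R w"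
proof -
  obtain c w where cw: "rep \<mu> e = c *\<^sub>R w" "c \<ge> 0" "w \<in> \<Omega>" using rep_pos[OF e] unfolding pos_cone_def by blast
  have "c \<noteq> 0"
  proof
    assume "c = 0"
    then have "e x = 0" for x using rep_ip[OF eff_lin[OF e], of x] cw by (simp add: ip_zero1)
    then show False using nz by auto
  qed
  then have "c > 0" using cw by simp
  then show ?thesis using cw by blast
qed

lemma ext_const:
  assumes "w extreme_point_of \<Omega>" "w' extreme_point_of \<Omega>"
  shows "ip w' w' = ip w w"
proof -
  obtain T where "T \<in> G" "T *v w = w'" using trans assms unfolding transitive_ss_def by blast
  then show ?thesis using ip_invariant by metis
qed

lemma ip_max:
  assumes w: "w extreme_point_of \<Omega>" and x: "x \<in> \<Omega>"
  shows "ip w x \<le> ip w w"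
proof -
  let ?H = "{x. ip w x \<le> ip w w}"
  have "{x. x extreme_point_of \<Omega>} \<subseteq> ?H"
  proof
    fix w' assume "w' \<in> {x. x extreme_point_of \<Omega>}"
    then have w': "w' extreme_point_of \<Omega>" by simp
    have "0 \<le> ip (w - w') (w - w')" by (rule bf_nonneg)
    also have "\<dots> = ip w w - 2 * ip w w' + ip w' w'"
      by (simp add: ip_diff1 ip_diff2 bf_sym[of _ w' w])
    finally show "w' \<in> ?H" using ext_const[OF w w'] by simp
  qed
  moreover have "convex ?H"
    unfolding convex_def by (auto simp: ip_add2 ip_scale2 intro!: convex_bound_le)
  ultimately have "convex hull {x. x extreme_point_of \<Omega>} \<subseteq> ?H" by (rule hull_minimal)
  then show ?thesis using x Krein_Milman_Minkowski[OF compact_O convex_O] by auto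
qed

lemma ip_lin2: "linear (\<lambda>x. ip p x)" by (rule bf_lin2[OF ok_id])

lemma key:
  assumes pe: "pure_effect \<Omega> e" and ind: "indecomposable \<Omega> e"
  shows "\<exists>c w. c > 0 \<and> w \<in> \<Omega> \<and> rep \<mu> e = c *\<^sub>R w \<and> e w = 1"
proof -
  have e: "e \<in> effects \<Omega>" and nz: "e \<noteq> (\<lambda>x. 0)" using ind unfolding indecomposable_def by auto
  have el: "linear e" by (rule eff_lin[OF e])
  obtain c w where c: "c > 0" and w: "w \<in> \<Omega>" and rw: "rep \<mu> e = c *\<^sub>R w"
    using rep_nonzero[OF e nz] by blast
  have ex: "e x = c * ip w x" for x using rep_ip[OF el, of x] rw by (simp add: ip_scale1)
  have wext: "w extreme_point_of \<Omega>"
    unfolding extreme_point_of_def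
  proof (intro conjI w ballI notI)
    fix a b assume a: "a \<in> \<Omega>" and b: "b \<in> \<Omega>" and wab: "w \<in> open_segment a b"
    then obtain t where ab: "a \<noteq> b" and t: "0 < t" "t < 1" and wt: "w = (1 - t) *\<^sub>R a + t *\<^sub>R b"
      by (auto simp: in_segment)
    define e1 where "e1 x = ip ((c * (1 - t)) *\<^sub>R a) x" for x
    define e2 where "e2 x = ip ((c * t) *\<^sub>R b) x" for x
    have esum: "e = (\<lambda>x. e1 x + e2 x)"
    proof
      fix x
      have "e x = ip (rep \<mu> e) x" by (rule rep_ip[OF el, symmetric])
      also have "\<dots> = e1 x + e2 x"
      proof -
        have "rep \<mu> e = (c * (1 - t)) *\<^sub>R a + (c * t) *\<^sub>R b"
          unfolding rw wt by (simp add: scaleR_add_right)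
        then show ?thesis unfolding e1_def e2_def by (simp only: ip_add1)
      qed
      finally show "e x = e1 x + e2 x" .
    qed
    have e1n: "0 \<le> e1 x" if "x \<in> \<Omega>" for x
      unfolding e1_def using ip_O_nonneg[OF a that] c t by (simp add: ip_scale1)
    have e2n: "0 \<le> e2 x" if "x \<in> \<Omega>" for x
      unfolding e2_def using ip_O_nonneg[OF b that] c t by (simp add: ip_scale1)
    have e1e: "e1 \<in> effects \<Omega>"
      unfolding effects_def
    proof (intro CollectI conjI ballI)
      show "linear e1" unfolding e1_def[abs_def] by (rule ip_lin2)
    next
      fix x assume x: "x \<in> \<Omega>"
      show "0 \<le> e1 x" by (rule e1n[OF x])
      have "e x = e1 x + e2 x" using esum by (rule fun_cong)
      then show "e1 x \<le> 1" using e2n[OF x] eff_bd[OF e x] by linarith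
    qed
    have e2e: "e2 \<in> effects \<Omega>"
      unfolding effects_def
    proof (intro CollectI conjI ballI)
      show "linear e2" unfolding e2_def[abs_def] by (rule ip_lin2)
    next
      fix x assume x: "x \<in> \<Omega>"
      show "0 \<le> e2 x" by (rule e2n[OF x])
      have "e x = e1 x + e2 x" using esum by (rule fun_cong)
      then show "e2 x \<le> 1" using e1n[OF x] eff_bd[OF e x] by linarith
    qed
    have same: "p = w" if p: "p \<in> \<Omega>" and s: "s > 0" and h: "\<exists>c1. (\<lambda>x. ip (s *\<^sub>R p) x) = (\<lambda>x. c1 * e x)" for p s
    proof -
      obtain c1 where "(\<lambda>x. ip (s *\<^sub>R p) x) = (\<lambda>x. c1 * e x)" using h by blast
      then have "ip (s *\<^sub>R p) x = ip ((c1 * c) *\<^sub>R w) x" for x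
        by (metis ex ip_scale1 mult.assoc)
      then have eq: "s *\<^sub>R p = (c1 * c) *\<^sub>R w" by (rule ip_inj)
      then have "s = c1 * c" using u_scale[OF p, of s] u_scale[OF w, of "c1 * c"] by simp
      then show ?thesis using eq s by (metis less_irrefl mult_zero_left mult_zero_right scaleR_cancel_left)
    qed
    have "a = w"
      using ind e1e e2e esum unfolding indecomposable_def
      by (intro same[OF a, of "c * (1 - t)"]) (use c t in \<open>auto simp: e1_def[abs_def]\<close>)
    moreover have "b = w"
      using ind e1e e2e esum unfolding indecomposable_def
      by (intro same[OF b, of "c * t"]) (use c t in \<open>auto simp: e2_def[abs_def]\<close>)
    ultimately show False using ab by simp
  qed
  have wpos: "ip w w > 0"
  proof -
    have "ip w w \<noteq> 0" using bf_zero[OF ok_id, of w] zero_notin w by auto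
    then show ?thesis using bf_nonneg[of "\<lambda>S. S" w] by simp
  qed
  have emax: "e x \<le> e w" if "x \<in> \<Omega>" for x
    using ip_max[OF wext that] c by (simp add: ex)
  have ew1: "e w = 1"
  proof (rule ccontr)
    assume "e w \<noteq> 1"
    then have m1: "e w < 1" using eff_bd[OF e w] by simp
    define m where "m = e w"
    have m0: "m > 0" unfolding m_def using ex[of w] c wpos by simp
    define b where "b x = e x / m" for x
    have zeff: "(\<lambda>x. 0) \<in> effects \<Omega>" unfolding effects_def by (auto intro: linearI)
    have blin: "linear b" unfolding b_def[abs_def]
      by (rule linearI) (simp_all add: linear_add[OF el] linear_scale[OF el] add_divide_distrib)
    have beff: "b \<in> effects \<Omega>" unfolding effects_def
      using blin eff_bd[OF e] emax m0 by (auto simp: b_def m_def)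
    have bnz: "(\<lambda>x. 0) \<noteq> b"
    proof
      assume "(\<lambda>x. 0) = b"
      then have "e x = 0" for x using m0 by (metis b_def divide_eq_0_iff less_irrefl)
      then show False using nz by auto
    qed
    have "e = (\<lambda>x. (1 - m) * 0 + m * b x)" using m0 by (simp add: b_def)
    then show False using pe zeff beff bnz m0 m1 unfolding pure_effect_def m_def by blast
  qed
  show ?thesis using c w rw ew1 by blast
qed


lemma lin_sumlist: "(\<forall>e\<in>set es. linear e) \<Longrightarrow> linear (\<lambda>x. \<Sum>e\<leftarrow>es. (e x :: real))"
proof (induction es)
  case Nil then show ?case by (simp add: linearI)
next
  case (Cons a es) then show ?case by (simp add: linear_compose_add)
qed

lemma f_sumlist: "linear f \<Longrightarrow> f (\<Sum>e\<leftarrow>es. h e) = (\<Sum>e\<leftarrow>es. f (h e))"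
  by (induction es) (simp_all add: linear_add linear_0)

lemma ip_sumlist1: "ip (\<Sum>e\<leftarrow>es. h e) x = (\<Sum>e\<leftarrow>es. ip (h e) x)"
  by (induction es) (simp_all add: ip_add1 ip_zero1)

lemma sum_key:
  assumes all: "\<forall>e\<in>set es. pure_effect \<Omega> e \<and> indecomposable \<Omega> e"
    and le1: "\<forall>x\<in>\<Omega>. (\<Sum>e\<leftarrow>es. e x) \<le> 1"
  shows "(\<lambda>x. \<Sum>e\<leftarrow>es. e x) (rep \<mu> (\<lambda>x. \<Sum>e\<leftarrow>es. e x)) = u (rep \<mu> (\<lambda>x. \<Sum>e\<leftarrow>es. e x))"
proof -
  define g where "g = (\<lambda>x. \<Sum>e\<leftarrow>es. e x)"
  have "\<forall>e\<in>set es. \<exists>cw. fst cw > 0 \<and> snd cw \<in> \<Omega> \<and> rep \<mu> e = fst cw *\<^sub>R snd cw \<and> e (snd cw) = 1"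
    using all key by fastforce
  then obtain F where F: "\<forall>e\<in>set es. fst (F e) > 0 \<and> snd (F e) \<in> \<Omega> \<and> rep \<mu> e = fst (F e) *\<^sub>R snd (F e) \<and> e (snd (F e)) = 1"
    by (metis bchoice)
  have effs: "e \<in> effects \<Omega>" if "e \<in> set es" for e
    using all that unfolding pure_effect_def by blast
  have lins: "\<forall>e\<in>set es. linear e" using effs eff_lin by blast
  have glin: "linear g" unfolding g_def by (rule lin_sumlist[OF lins])
  have "rep \<mu> g = (\<Sum>e\<leftarrow>es. rep \<mu> e)"
  proof (rule rep_unique[OF glin])
    fix x
    have "ip (\<Sum>e\<leftarrow>es. rep \<mu> e) x = (\<Sum>e\<leftarrow>es. ip (rep \<mu> e) x)" by (rule ip_sumlist1)
    also have "\<dots> = (\<Sum>e\<leftarrow>es. e x)"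
      by (rule arg_cong[where f=sum_list], rule map_cong[OF refl]) (use lins rep_ip in blast)
    finally show "ip (\<Sum>e\<leftarrow>es. rep \<mu> e) x = g x" by (simp add: g_def)
  qed
  also have "\<dots> = (\<Sum>e\<leftarrow>es. fst (F e) *\<^sub>R snd (F e))"
    by (rule arg_cong[where f=sum_list], rule map_cong[OF refl]) (use F in blast)
  finally have rg: "rep \<mu> g = (\<Sum>e\<leftarrow>es. fst (F e) *\<^sub>R snd (F e))" .
  have g1: "g (snd (F e)) = 1" if e: "e \<in> set es" for e
  proof -
    have w: "snd (F e) \<in> \<Omega>" using F e by blast
    have "e (snd (F e)) \<le> (\<Sum>e'\<leftarrow>es. e' (snd (F e)))"
      by (rule Groups_List.member_le_sum_list) (use e effs eff_bd w in auto)
    moreover have "e (snd (F e)) = 1" using F e by blast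
    ultimately have "1 \<le> g (snd (F e))" by (simp add: g_def)
    moreover have "g (snd (F e)) \<le> 1" using le1 w by (simp add: g_def)
    ultimately show ?thesis by linarith
  qed
  have "g (rep \<mu> g) = (\<Sum>e\<leftarrow>es. fst (F e) * g (snd (F e)))"
    unfolding rg f_sumlist[OF glin] by (simp add: linear_scale[OF glin])
  also have "\<dots> = (\<Sum>e\<leftarrow>es. fst (F e))"
    by (rule arg_cong[where f=sum_list], rule map_cong[OF refl]) (simp add: g1)
  also have "\<dots> = (\<Sum>e\<leftarrow>es. fst (F e) * u (snd (F e)))"
    by (rule arg_cong[where f=sum_list], rule map_cong[OF refl]) (use F u1 in auto)
  also have "\<dots> = u (rep \<mu> g)"
    unfolding rg f_sumlist[OF u_lin] by (simp add: linear_scale[OF u_lin])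
  finally show ?thesis unfolding g_def .
qed


lemma ipu: "ipGL \<mu> (rep \<mu> u) y = u y" by (rule rep_eq[OF u_lin])

lemma u_rep_pos: assumes e: "e \<in> effects \<Omega>" and nz: "e \<noteq> (\<lambda>x. 0)"
  shows "u (rep \<mu> e) > 0"
proof -
  obtain c w where "c > 0" "w \<in> \<Omega>" "rep \<mu> e = c *\<^sub>R w" using rep_nonzero[OF e nz] by blast
  then show ?thesis using u_scale by simp
qed

lemma part1: assumes e: "e \<in> effects \<Omega>" and nz: "e \<noteq> (\<lambda>x. 0)"
  shows "(1 / ipGL \<mu> (rep \<mu> u) (rep \<mu> e)) *\<^sub>R rep \<mu> e \<in> \<Omega>"
proof -
  obtain c w where "c > 0" "w \<in> \<Omega>" "rep \<mu> e = c *\<^sub>R w" using rep_nonzero[OF e nz] by blast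
  then show ?thesis by (simp add: ipu u_scale)
qed

lemma part2:
  assumes io: "ideal_observable \<Omega> u A f" and a: "a \<in> A" and nz: "f a \<noteq> (\<lambda>x. 0)"
  shows "ipGL \<mu> (rep \<mu> (f a)) ((1 / ipGL \<mu> (rep \<mu> u) (rep \<mu> (f a))) *\<^sub>R rep \<mu> (f a)) = 1"
proof -
  have fe: "f a \<in> effects \<Omega>" using io a unfolding ideal_observable_def observable_def by blast
  have fl: "linear (f a)" by (rule eff_lin[OF fe])
  obtain es where all: "\<forall>e\<in>set es. pure_effect \<Omega> e \<and> indecomposable \<Omega> e"
    and cases: "f a = (\<lambda>x. \<Sum>e\<leftarrow>es. e x) \<or> f a = (\<lambda>x. u x - (\<Sum>e\<leftarrow>es. e x))"
    using io a unfolding ideal_observable_def by blast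
  define g where "g = (\<lambda>x. \<Sum>e\<leftarrow>es. e x)"
  have lins: "\<forall>e\<in>set es. linear e" using all eff_lin unfolding pure_effect_def by blast
  have glin: "linear g" unfolding g_def by (rule lin_sumlist[OF lins])
  have fx: "f a (rep \<mu> (f a)) = u (rep \<mu> (f a))"
    using cases
  proof
    assume fa: "f a = (\<lambda>x. \<Sum>e\<leftarrow>es. e x)"
    have "\<forall>x\<in>\<Omega>. (\<Sum>e\<leftarrow>es. e x) \<le> 1" using eff_bd[OF fe] fa by simp
    then show ?thesis using sum_key[OF all] fa by simp
  next
    assume fa: "f a = (\<lambda>x. u x - (\<Sum>e\<leftarrow>es. e x))"
    have "\<forall>x\<in>\<Omega>. (\<Sum>e\<leftarrow>es. e x) \<le> 1" using eff_bd[OF fe] fa u1 by fastforce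
    then have gg: "g (rep \<mu> g) = u (rep \<mu> g)" using sum_key[OF all] by (simp add: g_def)
    have fa': "f a = (\<lambda>x. u x - g x)" using fa by (simp add: g_def)
    have rf: "rep \<mu> (f a) = rep \<mu> u - rep \<mu> g"
      by (rule rep_unique[OF fl]) (simp add: ip_diff1 rep_ip[OF u_lin] rep_ip[OF glin] fa')
    have gu: "g (rep \<mu> u) = u (rep \<mu> g)"
      using rep_ip[OF glin, of "rep \<mu> u"] rep_ip[OF u_lin, of "rep \<mu> g"] bf_sym by metis
    have "f a (rep \<mu> (f a)) = (u (rep \<mu> u) - u (rep \<mu> g)) - (g (rep \<mu> u) - g (rep \<mu> g))"
      unfolding rf by (simp add: fa' linear_diff[OF u_lin] linear_diff[OF glin])
    also have "\<dots> = u (rep \<mu> u) - u (rep \<mu> g)" using gg gu by simp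
    also have "\<dots> = u (rep \<mu> (f a))" unfolding rf by (simp add: linear_diff[OF u_lin])
    finally show ?thesis .
  qed
  have cpos: "u (rep \<mu> (f a)) > 0" by (rule u_rep_pos[OF fe nz])
  have "ipGL \<mu> (rep \<mu> (f a)) ((1 / ipGL \<mu> (rep \<mu> u) (rep \<mu> (f a))) *\<^sub>R rep \<mu> (f a))
      = (1 / u (rep \<mu> (f a))) * ip (rep \<mu> (f a)) (rep \<mu> (f a))"
    unfolding ipu by (simp add: ip_eq ip_scale2)
  also have "\<dots> = 1" using fx cpos by (simp add: rep_ip[OF fl])
  finally show ?thesis .
qed


end


theorem lemma3p2:
  fixes \<Omega> :: "(real^'n) set" and \<mu> :: "(real^'n^'n) measure"
    and u :: "real^'n \<Rightarrow> real" and \<omega>M :: "real^'n"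
  assumes "state_space \<Omega>"
    and "haar_GL \<Omega> \<mu>"
    and "transitive_ss \<Omega>"
    and "\<omega>M \<in> \<Omega>" and "\<forall>T \<in> GLset \<Omega>. T *v \<omega>M = \<omega>M" and "\<omega>M \<bullet> \<omega>M = 1"
    and "self_dual_GL \<Omega> \<mu>"
    and "unit_effect \<Omega> u"
  shows "(\<forall>e \<in> effects \<Omega>. e \<noteq> (\<lambda>x. 0) \<longrightarrow>
            (1 / ipGL \<mu> (rep \<mu> u) (rep \<mu> e)) *\<^sub>R rep \<mu> e \<in> \<Omega>)
       \<and> (\<forall>(A :: 'a set) f. ideal_observable \<Omega> u A f \<longrightarrow>
            (\<forall>a \<in> A. f a \<noteq> (\<lambda>x. 0) \<longrightarrow>
               ipGL \<mu> (rep \<mu> (f a))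
                 ((1 / ipGL \<mu> (rep \<mu> u) (rep \<mu> (f a))) *\<^sub>R rep \<mu> (f a)) = 1))"
proof -
  interpret msetting \<Omega> \<mu> u
    by (rule msetting.intro[OF hsetting.intro msetting_axioms.intro]) (use assms in auto)
  show ?thesis
  proof (intro conjI ballI impI allI)
    fix e assume "e \<in> effects \<Omega>" "e \<noteq> (\<lambda>x. 0)"
    then show "(1 / ipGL \<mu> (rep \<mu> u) (rep \<mu> e)) *\<^sub>R rep \<mu> e \<in> \<Omega>" by (rule part1)
  next
    fix A :: "'a set" and f a
    assume "ideal_observable \<Omega> u A f" "a \<in> A" "f a \<noteq> (\<lambda>x. 0)"
    then show "ipGL \<mu> (rep \<mu> (f a)) ((1 / ipGL \<mu> (rep \<mu> u) (rep \<mu> (f a))) *\<^sub>R rep \<mu> (f a)) = 1"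
      by (rule part2)
  qed
qed

end
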